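(* Let $Y=\bigcap_{n\in\omega}U_n$, where each $U_n$ is an open $\pi$-dense subset of the Baire space $\mathcal N=(\omega^\omega,\tau_{\mathcal N})$. Then there is a Baire foliage tree on $Y$ (with the subspace topology from $\mathcal N$) that shoots into the standard foliage tree $\mathbf S$.
   Context: A tree is a pair $(Q,<)$ with $<$ irreflexive transitive such that every set of predecessors $\{v:v<x\}$ is well-ordered; $\mathrm{sons}(x)$ = set of immediate successors of $x$; a branch is an inclusion-maximal chain. A foliage tree is $\mathbf F=(\mathcal T,l)$ with $\mathcal T$ a tree (skeleton) and $\mathbf F_x=l(x)$ the leaf at node $x$. The standard foliage tree $\mathbf S$ has skeleton $(\omega^{<\omega},\subsetneq)$ and leaves $\mathbf S_x=\{p\in\omega^\omega:x\subseteq p\}$. $A\subseteq\omega^\omega$ is $\pi$-dense in the Baire space iff for every $y\in\omega^{<\omega}$ infinitely many $n$ satisfy $\mathbf S_{y^\frown\langle n\rangle}\subseteq A$. $\mathrm{fruit}_{\mathbf F}(A)=\bigcap_{x\in A}\mathbf F_x$; $\mathrm{flesh}\,\mathbf F=\bigcup_x\mathbf F_x$; $\mathrm{shoot}_{\mathbf F}(z)=\{\bigcup_{s\in C}\mathbf F_s: C$ cofinite subset of $\mathrm{sons}(z)\}$; $\mathrm{scope}_{\mathbf F}(p)=\{y:p\in\mathbf F_y\}$; for families $\gamma,\delta$, $\gamma\gg\delta$ means every nonempty $D\in\delta$ contains some nonempty $G\in\gamma$. A Baire foliage tree on a space $X$ is a foliage tree whose skeleton is isomorphic to $(\omega^{<\omega},\subsetneq)$,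 all of whose leaves are open in $X$, which is locally strict (for every non-maximal node $x$, $\mathbf F_x$ is the union of the pairwise disjoint family $(\mathbf F_s)_{s\in\mathrm{sons}(x)}$), has strict branches (it has a node and $\mathrm{fruit}_{\mathbf F}(B)$ is a singleton for every branch $B$), and whose leaf at its least node equals $X$. A foliage tree $\mathbf H$ shoots into a foliage tree $\mathbf F$ iff for every $p\in\mathrm{flesh}\,\mathbf H$ and every $y\in\mathrm{scope}_{\mathbf F}(p)$ there is $x\in\mathrm{scope}_{\mathbf H}(p)$ with $\mathrm{shoot}_{\mathbf H}(x)\gg\mathrm{shoot}_{\mathbf F}(y)$. *)

theory Defs
  imports "HOL-Analysis.Analysis" "HOL-Library.Sublist" "HOL-Library.Disjoint_Sets"
begin

text \<open>A foliage tree is given by a skeleton (node set Q with strict order lt)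
  and a leaf map l. The Baire space is nat => nat with the library product topology
  (nat being discrete).\<close>

definition is_tree :: "'a set \<Rightarrow> ('a \<Rightarrow> 'a \<Rightarrow> bool) \<Rightarrow> bool" where
  "is_tree Q lt \<longleftrightarrow>
     (\<forall>x\<in>Q. \<not> lt x x) \<and>
     (\<forall>x\<in>Q. \<forall>y\<in>Q. \<forall>z\<in>Q. lt x y \<and> lt y z \<longrightarrow> lt x z) \<and>
     (\<forall>x\<in>Q. let P = {v\<in>Q. lt v x} in
        (\<forall>a\<in>P. \<forall>b\<in>P. a = b \<or> lt a b \<or> lt b a) \<and>
        (\<forall>S. S \<subseteq> P \<and> S \<noteq> {} \<longrightarrow> (\<exists>m\<in>S. \<forall>s\<in>S. \<not> lt s m)))"

definition sons :: "'a set \<Rightarrow> ('a \<Rightarrow> 'a \<Rightarrow> bool) \<Rightarrow> 'a \<Rightarrow> 'a set" where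
  "sons Q lt x = {y\<in>Q. lt x y \<and> \<not> (\<exists>z\<in>Q. lt x z \<and> lt z y)}"

definition is_chain :: "'a set \<Rightarrow> ('a \<Rightarrow> 'a \<Rightarrow> bool) \<Rightarrow> 'a set \<Rightarrow> bool" where
  "is_chain Q lt C \<longleftrightarrow> C \<subseteq> Q \<and> (\<forall>a\<in>C. \<forall>b\<in>C. a = b \<or> lt a b \<or> lt b a)"

definition is_branch :: "'a set \<Rightarrow> ('a \<Rightarrow> 'a \<Rightarrow> bool) \<Rightarrow> 'a set \<Rightarrow> bool" where
  "is_branch Q lt B \<longleftrightarrow> is_chain Q lt B \<and> (\<forall>D. is_chain Q lt D \<and> B \<subseteq> D \<longrightarrow> D = B)"

definition fruit :: "('a \<Rightarrow> 'b set) \<Rightarrow> 'a set \<Rightarrow> 'b set" where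
  "fruit l A = (\<Inter>x\<in>A. l x)"

definition flesh :: "'a set \<Rightarrow> ('a \<Rightarrow> 'b set) \<Rightarrow> 'b set" where
  "flesh Q l = (\<Union>x\<in>Q. l x)"

definition shoot :: "'a set \<Rightarrow> ('a \<Rightarrow> 'a \<Rightarrow> bool) \<Rightarrow> ('a \<Rightarrow> 'b set) \<Rightarrow> 'a \<Rightarrow> 'b set set" where
  "shoot Q lt l z = {(\<Union>s\<in>C. l s) | C. C \<subseteq> sons Q lt z \<and> finite (sons Q lt z - C)}"

definition scope :: "'a set \<Rightarrow> ('a \<Rightarrow> 'b set) \<Rightarrow> 'b \<Rightarrow> 'a set" where
  "scope Q l p = {y\<in>Q. p \<in> l y}"

definition dominates :: "'b set set \<Rightarrow> 'b set set \<Rightarrow> bool" (infix "\<ggreater>\<^sub>f" 50) where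
  "\<gamma> \<ggreater>\<^sub>f \<delta> \<longleftrightarrow> (\<forall>D\<in>\<delta>. D \<noteq> {} \<longrightarrow> (\<exists>G\<in>\<gamma>. G \<noteq> {} \<and> G \<subseteq> D))"

definition shoots_into ::
  "'a set \<Rightarrow> ('a \<Rightarrow> 'a \<Rightarrow> bool) \<Rightarrow> ('a \<Rightarrow> 'b set) \<Rightarrow>
   'c set \<Rightarrow> ('c \<Rightarrow> 'c \<Rightarrow> bool) \<Rightarrow> ('c \<Rightarrow> 'b set) \<Rightarrow> bool" where
  "shoots_into QH ltH lH QF ltF lF \<longleftrightarrow>
     (\<forall>p\<in>flesh QH lH. \<forall>y\<in>scope QF lF p. \<exists>x\<in>scope QH lH p.
        shoot QH ltH lH x \<ggreater>\<^sub>f shoot QF ltF lF y)"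

definition baire_foliage_tree ::
  "'b::topological_space set \<Rightarrow> 'a set \<Rightarrow> ('a \<Rightarrow> 'a \<Rightarrow> bool) \<Rightarrow> ('a \<Rightarrow> 'b set) \<Rightarrow> bool" where
  "baire_foliage_tree X Q lt l \<longleftrightarrow>
     is_tree Q lt \<and>
     (\<exists>f. bij_betw f Q (UNIV :: nat list set) \<and>
          (\<forall>x\<in>Q. \<forall>y\<in>Q. lt x y \<longleftrightarrow> strict_prefix (f x) (f y))) \<and>
     (\<forall>x\<in>Q. openin (top_of_set X) (l x)) \<and>
     (\<forall>x\<in>Q. (\<exists>y\<in>Q. lt x y) \<longrightarrow>
        l x = (\<Union>s\<in>sons Q lt x. l s) \<and> disjoint_family_on l (sons Q lt x)) \<and>
     Q \<noteq> {} \<and> (\<forall>B. is_branch Q lt B \<longrightarrow> (\<exists>p. fruit l B = {p})) \<and>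
     (\<exists>r\<in>Q. (\<forall>y\<in>Q. y \<noteq> r \<longrightarrow> lt r y) \<and> l r = X)"

definition S_leaf :: "nat list \<Rightarrow> (nat \<Rightarrow> nat) set" where
  "S_leaf x = {p. \<forall>i<length x. p i = x ! i}"

definition pi_dense :: "(nat \<Rightarrow> nat) set \<Rightarrow> bool" where
  "pi_dense A \<longleftrightarrow> (\<forall>y::nat list. infinite {n. S_leaf (y @ [n]) \<subseteq> A})"

end

theory Submission imports Defs "HOL-Library.Countable" begin

lemma Sl_iff: "p \<in> S_leaf t \<longleftrightarrow> (\<forall>i<length t. p i = t ! i)"
  by (simp add: S_leaf_def)

lemma Sl_prefix: "prefix a b \<Longrightarrow> S_leaf b \<subseteq> S_leaf a"
  unfolding S_leaf_def prefix_def by (auto simp: nth_append)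

lemma Sl_snoc: "S_leaf (t @ [n]) \<subseteq> S_leaf t"
  by (rule Sl_prefix) simp

lemma Sl_eq_map: "p \<in> S_leaf a \<Longrightarrow> a = map p [0..<length a]"
  by (intro nth_equalityI) (auto simp: S_leaf_def)

lemma prefix_map_upt: "m \<le> n \<Longrightarrow> prefix (map p [0..<m]) (map p [0..<n])"
proof -
  assume "m \<le> n"
  then have "map p [0..<m] = take m (map p [0..<n])" by (simp add: take_map)
  then show ?thesis by (metis take_is_prefix)
qed

lemma Sl_comparable:
  assumes "p \<in> S_leaf a" "p \<in> S_leaf b"
  shows "prefix a b \<or> prefix b a"
proof (cases "length a \<le> length b")
  case True
  then show ?thesis using Sl_eq_map[OF assms(1)] Sl_eq_map[OF assms(2)] prefix_map_upt by metis
next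
  case False
  then show ?thesis using Sl_eq_map[OF assms(1)] Sl_eq_map[OF assms(2)] prefix_map_upt
    by (metis nat_le_linear)
qed

lemma Sl_ex: "\<exists>p. p \<in> S_leaf t"
  by (rule exI[of _ "\<lambda>i. if i < length t then t ! i else 0"]) (simp add: S_leaf_def)

lemma Sl_snoc_iff: "p \<in> S_leaf (t @ [n]) \<longleftrightarrow> p \<in> S_leaf t \<and> p (length t) = n"
proof
  assume h: "p \<in> S_leaf (t @ [n])"
  then have "\<forall>i<Suc (length t). p i = (t @ [n]) ! i" by (simp add: S_leaf_def)
  then have A: "p i = t ! i" if "i < length t" for i
    using that by (metis less_SucI nth_append_left)
  have B: "p (length t) = n"
    using \<open>\<forall>i<Suc (length t). p i = (t @ [n]) ! i\<close> by (metis lessI nth_append_length)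
  show "p \<in> S_leaf t \<and> p (length t) = n"
    using A B by (simp add: S_leaf_def)
next
  assume h: "p \<in> S_leaf t \<and> p (length t) = n"
  show "p \<in> S_leaf (t @ [n])" unfolding S_leaf_def
  proof (clarsimp)
    fix i assume "i < Suc (length t)"
    then consider "i < length t" | "i = length t" by linarith
    then show "p i = (t @ [n]) ! i"
    proof cases
      case 1
      then show ?thesis using h by (simp add: S_leaf_def nth_append_left)
    next
      case 2
      then show ?thesis using h by simp
    qed
  qed
qed

lemma Sl_split: "S_leaf t = (\<Union>n. S_leaf (t @ [n]))"
proof
  show "S_leaf t \<subseteq> (\<Union>n. S_leaf (t @ [n]))"
  proof
    fix p assume "p \<in> S_leaf t"
    then have "p \<in> S_leaf (t @ [p (length t)])" by (simp add: Sl_snoc_iff)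
    then show "p \<in> (\<Union>n. S_leaf (t @ [n]))" by blast
  qed
  show "(\<Union>n. S_leaf (t @ [n])) \<subseteq> S_leaf t"
    using Sl_snoc by blast
qed

lemma Sl_disj: "n \<noteq> n' \<Longrightarrow> S_leaf (t @ [n]) \<inter> S_leaf (t @ [n']) = {}"
  by (auto simp: Sl_snoc_iff)

lemma Sl_disj_inc: "S_leaf a \<inter> S_leaf b = {} \<Longrightarrow> prefix a a' \<Longrightarrow> prefix b b' \<Longrightarrow> S_leaf a' \<inter> S_leaf b' = {}"
  using Sl_prefix by blast

lemma Sl_sub_iff: "S_leaf a \<subseteq> S_leaf b \<Longrightarrow> prefix b a"
proof -
  assume h: "S_leaf a \<subseteq> S_leaf b"
  obtain p where "p \<in> S_leaf a" using Sl_ex by blast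
  define q where "q = (\<lambda>i. if i < length a then a ! i else Suc (if i < length b then b ! i else 0))"
  have qa: "q \<in> S_leaf a" by (simp add: q_def S_leaf_def)
  then have qb: "q \<in> S_leaf b" using h by blast
  from Sl_comparable[OF qa qb] show "prefix b a"
  proof
    assume "prefix a b"
    then show ?thesis
    proof (cases "a = b")
      case False
      with \<open>prefix a b\<close> have "length a < length b"
        by (simp add: prefix_length_less)
      moreover from \<open>prefix a b\<close> have "b ! length a = q (length a)"
        using qb calculation by (simp add: S_leaf_def)
      ultimately show ?thesis by (simp add: q_def) 
    qed simp
  qed
qed

lemma open_Sl: "open (S_leaf t)"
proof -
  have "S_leaf t = Pi\<^sub>E UNIV (\<lambda>i. if i < length t then {t ! i} else UNIV)"
    by (auto simp: S_leaf_def PiE_def Pi_def extensional_def)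
  moreover have "open (Pi\<^sub>E UNIV (\<lambda>i. if i < length t then {t ! i} else (UNIV::nat set)))"
  proof (rule open_PiE)
    show "finite {i. (if i < length t then {t ! i} else UNIV) \<noteq> (UNIV::nat set)}"
      by (rule finite_subset[of _ "{..<length t}"]) auto
  qed (simp add: open_discrete)
  ultimately show ?thesis by simp
qed

lemma open_nbhd:
  assumes "open U" "x \<in> U"
  shows "\<exists>L. S_leaf (map x [0..<L]) \<subseteq> U"
proof -
  from assms have "openin (product_topology (\<lambda>i. euclidean) UNIV) U" by (simp add: open_fun_def)
  from product_topology_open_contains_basis[OF this assms(2)] obtain X where
    X: "x \<in> Pi\<^sub>E UNIV X" "finite {i. X i \<noteq> topspace euclidean}" "Pi\<^sub>E UNIV X \<subseteq> U"
    by blast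
  from X(2) obtain L where L: "{i. X i \<noteq> UNIV} \<subseteq> {..<L}" using finite_nat_bounded by force
  have "S_leaf (map x [0..<L]) \<subseteq> Pi\<^sub>E UNIV X"
  proof
    fix f assume f: "f \<in> S_leaf (map x [0..<L])"
    show "f \<in> Pi\<^sub>E UNIV X"
    proof (auto simp: PiE_def Pi_def)
      fix i show "f i \<in> X i"
      proof (cases "i < L")
        case True then show ?thesis using f X(1) by (auto simp: S_leaf_def PiE_def Pi_def)
      next
        case False then have "X i = UNIV" using L by force
        then show ?thesis by simp
      qed
    qed
  qed
  with X(3) show ?thesis by blast
qed

lemma in_Sl_pf: "p \<in> S_leaf (map p [0..<n])"
  by (simp add: S_leaf_def)


datatype stt = St (cr: "nat list") (jk: "nat list set") (ck: nat)

definition ee :: "nat \<Rightarrow> nat list" where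
  "ee m = from_nat (fst (prod_decode (m div 2)))"

lemma ee_often: "\<exists>m\<ge>M. odd m \<and> ee m = t"
proof -
  define k where "k = prod_encode (to_nat t, M)"
  have "M \<le> k" unfolding k_def by (rule le_prod_encode_2)
  moreover have "ee (2 * k + 1) = t" by (simp add: ee_def k_def)
  ultimately show ?thesis by (intro exI[of _ "2*k+1"]) auto
qed

locale ctx =
  fixes U :: "nat \<Rightarrow> (nat \<Rightarrow> nat) set"
  assumes opn: "\<And>n. open (U n)" and pd: "\<And>n. pi_dense (U n)"
begin

definition Y where "Y = (\<Inter>n. U n)"

definition kk :: "nat list \<Rightarrow> enat" where
  "kk t = (if \<exists>k. \<not> S_leaf t \<subseteq> U k then enat (LEAST k. \<not> S_leaf t \<subseteq> U k) else \<infinity>)"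

lemma kk_mono: assumes "prefix a b" shows "kk a \<le> kk b"
proof (cases "\<exists>k. \<not> S_leaf b \<subseteq> U k")
  case True
  define K where "K = (LEAST k. \<not> S_leaf b \<subseteq> U k)"
  have "\<not> S_leaf b \<subseteq> U K" unfolding K_def using True by (rule LeastI_ex)
  then have nb: "\<not> S_leaf a \<subseteq> U K" using Sl_prefix[OF assms] by blast
  then have "(LEAST k. \<not> S_leaf a \<subseteq> U k) \<le> K" by (rule Least_le)
  then show ?thesis using True nb unfolding kk_def K_def by auto
next
  case False
  then show ?thesis by (simp add: kk_def)
qed

lemma kk_less: assumes "enat K < kk t" shows "S_leaf t \<subseteq> U K"
proof (cases "\<exists>k. \<not> S_leaf t \<subseteq> U k")
  case True
  then have "K < (LEAST k. \<not> S_leaf t \<subseteq> U k)" using assms by (simp add: kk_def)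
  then show ?thesis using not_less_Least by blast
next
  case False then show ?thesis by blast
qed

lemma kk_eq: assumes "kk t = enat K" shows "\<not> S_leaf t \<subseteq> U K"
proof -
  have ex: "\<exists>k. \<not> S_leaf t \<subseteq> U k" using assms by (auto simp: kk_def split: if_splits)
  then have "K = (LEAST k. \<not> S_leaf t \<subseteq> U k)" using assms by (simp add: kk_def)
  then show ?thesis using LeastI_ex[OF ex] by simp
qed

definition good :: "nat list \<Rightarrow> nat set" where
  "good w = {g. kk w = \<infinity> \<or> kk w < kk (w @ [g])}"

lemma good_inf: "infinite (good w)"
proof (cases "kk w = \<infinity>")
  case True then show ?thesis by (simp add: good_def)
next
  case False
  then obtain K where K: "kk w = enat K" by (cases "kk w") auto
  have ex: "\<exists>k. \<not> S_leaf w \<subseteq> U k" using K by (auto simp: kk_def split: if_splits)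
  have KL: "K = (LEAST k. \<not> S_leaf w \<subseteq> U k)" using K ex by (simp add: kk_def)
  have "{n. S_leaf (w @ [n]) \<subseteq> U K} \<subseteq> good w"
  proof
    fix n assume n: "n \<in> {n. S_leaf (w @ [n]) \<subseteq> U K}"
    have all: "S_leaf (w @ [n]) \<subseteq> U i" if "i \<le> K" for i
    proof (cases "i = K")
      case True then show ?thesis using n by simp
    next
      case False
      then have "i < K" using that by simp
      then have "S_leaf w \<subseteq> U i" using KL not_less_Least by blast
      then show ?thesis using Sl_snoc by blast
    qed
    have "enat K < kk (w @ [n])"
    proof (cases "\<exists>k. \<not> S_leaf (w @ [n]) \<subseteq> U k")
      case True
      have "\<not> S_leaf (w @ [n]) \<subseteq> U (LEAST k. \<not> S_leaf (w @ [n]) \<subseteq> U k)"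
        using LeastI_ex[OF True] .
      then have "K < (LEAST k. \<not> S_leaf (w @ [n]) \<subseteq> U k)" using all by (meson not_le)
      then show ?thesis using True by (simp add: kk_def)
    qed (simp add: kk_def)
    then show "n \<in> good w" using K by (simp add: good_def)
  qed
  moreover have "infinite {n. S_leaf (w @ [n]) \<subseteq> U K}" using pd[of K] by (simp add: pi_dense_def)
  ultimately show ?thesis using finite_subset by blast
qed

lemma bad_kk: assumes "n \<notin> good w" shows "kk w \<noteq> \<infinity>" "kk (w @ [n]) = kk w"
proof -
  show "kk w \<noteq> \<infinity>" using assms by (simp add: good_def)
  have "kk w \<le> kk (w @ [n])" by (rule kk_mono) simp
  then show "kk (w @ [n]) = kk w" using assms by (auto simp: good_def)
qed

definition gen :: "nat list \<Rightarrow> nat \<Rightarrow> nat" where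
  "gen w = enumerate (good w)"

lemma gen_good: "gen w j \<in> good w"
  unfolding gen_def by (rule enumerate_in_set[OF good_inf])

lemma gen_inj: "gen w j = gen w j' \<longleftrightarrow> j = j'"
proof
  assume eq: "gen w j = gen w j'"
  show "j = j'"
  proof (rule ccontr)
    assume "j \<noteq> j'"
    then consider "j < j'" | "j' < j" by linarith
    then show False
      by cases (use eq enumerate_mono[OF _ good_inf, of _ _ w] in \<open>unfold gen_def; metis less_irrefl\<close>)+
  qed
qed simp

lemma gen_range: "range (gen w) = good w"
  unfolding gen_def by (rule range_enumerate[OF good_inf])

lemma kk_good: assumes "g \<in> good w" shows "kk (w @ [g]) = \<infinity> \<or> kk w < kk (w @ [g])"
proof -
  have le: "kk w \<le> kk (w @ [g])" by (rule kk_mono) simp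
  from assms have "kk w = \<infinity> \<or> kk w < kk (w @ [g])" by (simp add: good_def)
  then show ?thesis
  proof
    assume "kk w = \<infinity>"
    then show ?thesis using le by (simp add: top_unique[where 'a=enat, unfolded top_enat_def])
  qed simp
qed

definition isJ :: "stt \<Rightarrow> bool" where
  "isJ s \<longleftrightarrow> odd (ck s) \<and> ee (ck s) \<in> jk s"

definition nxt :: "stt \<Rightarrow> nat \<Rightarrow> stt" where
  "nxt s j = (if isJ s then
      (if j = 0 then St (cr s) (jk s - {ee (ck s)} \<union> {ee (ck s) @ [n] |n. n \<notin> good (ee (ck s))}) (Suc (ck s))
       else St (ee (ck s) @ [gen (ee (ck s)) (j - 1)]) {} (Suc (ck s)))
    else St (cr s @ [gen (cr s) j])
            (if j = 0 then jk s \<union> {cr s @ [n] |n. n \<notin> good (cr s)} else {}) (Suc (ck s)))"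

definition W :: "stt \<Rightarrow> (nat \<Rightarrow> nat) set" where
  "W s = S_leaf (cr s) \<union> \<Union> (S_leaf ` jk s)"

definition Inv :: "stt \<Rightarrow> bool" where
  "Inv s \<longleftrightarrow> cr s \<notin> jk s \<and>
     (\<forall>a\<in>insert (cr s) (jk s). \<forall>b\<in>insert (cr s) (jk s). a \<noteq> b \<longrightarrow> S_leaf a \<inter> S_leaf b = {}) \<and>
     (\<forall>t\<in>jk s. kk t \<noteq> \<infinity>)"


lemma Sl_ne: "S_leaf a \<noteq> {}" using Sl_ex by blast

lemma prefix_not_disj: "prefix a b \<Longrightarrow> S_leaf a \<inter> S_leaf b \<noteq> {}"
  using Sl_prefix[of a b] Sl_ne[of b] by blast

lemma disj_lift:
  assumes P: "\<forall>a\<in>P. \<forall>b\<in>P. a \<noteq> b \<longrightarrow> S_leaf a \<inter> S_leaf b = {}"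
    and pi: "\<And>a. a \<in> P' \<Longrightarrow> \<pi> a \<in> P \<and> prefix (\<pi> a) a"
    and same: "\<And>a b. a \<in> P' \<Longrightarrow> b \<in> P' \<Longrightarrow> a \<noteq> b \<Longrightarrow> \<pi> a = \<pi> b \<Longrightarrow>
                 (\<exists>x y. x \<noteq> y \<and> a = \<pi> a @ [x] \<and> b = \<pi> a @ [y])"
  shows "\<forall>a\<in>P'. \<forall>b\<in>P'. a \<noteq> b \<longrightarrow> S_leaf a \<inter> S_leaf b = {}"
proof (intro ballI impI)
  fix a b assume ab: "a \<in> P'" "b \<in> P'" "a \<noteq> b"
  show "S_leaf a \<inter> S_leaf b = {}"
  proof (cases "\<pi> a = \<pi> b")
    case True
    then obtain x y where "x \<noteq> y" "a = \<pi> a @ [x]" "b = \<pi> a @ [y]" using same ab by blast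
    then show ?thesis using Sl_disj by metis
  next
    case False
    then have "S_leaf (\<pi> a) \<inter> S_leaf (\<pi> b) = {}" using P pi ab by blast
    then show ?thesis using Sl_disj_inc pi ab by blast
  qed
qed

lemma Inv_disj: "Inv s \<Longrightarrow> t \<in> jk s \<Longrightarrow> S_leaf t \<inter> S_leaf (cr s) = {}"
  unfolding Inv_def by (metis insertCI)

lemma Inv_disj2: "Inv s \<Longrightarrow> t \<in> jk s \<Longrightarrow> t' \<in> jk s \<Longrightarrow> t \<noteq> t' \<Longrightarrow> S_leaf t \<inter> S_leaf t' = {}"
  unfolding Inv_def by (metis insertCI)

lemma W_nxt_sub: "W (nxt s j) \<subseteq> W s"
proof (cases "isJ s")
  case True
  have v: "ee (ck s) \<in> jk s" using True by (simp add: isJ_def)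
  have "S_leaf (ee (ck s) @ [n]) \<subseteq> W s" for n using v Sl_snoc unfolding W_def by blast
  then show ?thesis using True unfolding nxt_def W_def by auto
next
  case False
  have "S_leaf (cr s @ [n]) \<subseteq> W s" for n using Sl_snoc unfolding W_def by blast
  then show ?thesis using False unfolding nxt_def W_def by auto
qed

lemma W_union: "W s \<subseteq> (\<Union>j. W (nxt s j))"
proof
  fix p assume p: "p \<in> W s"
  show "p \<in> (\<Union>j. W (nxt s j))"
  proof (cases "isJ s")
    case True
    define v where "v = ee (ck s)"
    show ?thesis
    proof (cases "p \<in> S_leaf v")
      case pv: True
      define n where "n = p (length v)"
      have pn: "p \<in> S_leaf (v @ [n])" using pv by (simp add: Sl_snoc_iff n_def)
      show ?thesis
      proof (cases "n \<in> good v")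
        case True
        then obtain j where "n = gen v j" using gen_range by (metis imageE)
        then have "p \<in> W (nxt s (Suc j))" using pn \<open>isJ s\<close> by (simp add: nxt_def W_def v_def)
        then show ?thesis by blast
      next
        case False
        then have "p \<in> W (nxt s 0)" using pn \<open>isJ s\<close> unfolding nxt_def W_def v_def by auto
        then show ?thesis by blast
      qed
    next
      case False
      then have "p \<in> W (nxt s 0)" using p True unfolding nxt_def W_def v_def by auto
      then show ?thesis by blast
    qed
  next
    case False
    define c where "c = cr s"
    show ?thesis
    proof (cases "p \<in> S_leaf c")
      case pv: True
      define n where "n = p (length c)"
      have pn: "p \<in> S_leaf (c @ [n])" using pv by (simp add: Sl_snoc_iff n_def)
      show ?thesis
      proof (cases "n \<in> good c")
        case True
        then obtain j where "n = gen c j" using gen_range by (metis imageE)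
        then have "p \<in> W (nxt s j)" using pn \<open>\<not> isJ s\<close> by (simp add: nxt_def W_def c_def)
        then show ?thesis by blast
      next
        case False
        then have "p \<in> W (nxt s 0)" using pn \<open>\<not> isJ s\<close> unfolding nxt_def W_def c_def by auto
        then show ?thesis by blast
      qed
    next
      case False
      then have "p \<in> W (nxt s 0)" using p \<open>\<not> isJ s\<close> unfolding nxt_def W_def c_def by auto
      then show ?thesis by blast
    qed
  qed
qed

lemma W_split: "W s = (\<Union>j. W (nxt s j))"
  using W_union W_nxt_sub by blast

lemma W_disj0:
  assumes inv: "Inv s" and j: "0 < j" and p: "p \<in> W (nxt s j)" "p \<in> W (nxt s j')" and jj: "j \<noteq> j'"
  shows False
proof (cases "isJ s")
  case True
  define v where "v = ee (ck s)"
  have vJ: "v \<in> jk s" using True by (simp add: isJ_def v_def)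
  have pj: "p \<in> S_leaf (v @ [gen v (j - 1)])" using p(1) True j by (simp add: nxt_def W_def v_def)
  then have pv: "p \<in> S_leaf v" using Sl_snoc by blast
  show False
  proof (cases "j' = 0")
    case False
    then have "p \<in> S_leaf (v @ [gen v (j' - 1)])" using p(2) True by (simp add: nxt_def W_def v_def)
    moreover have "gen v (j - 1) \<noteq> gen v (j' - 1)" using gen_inj j False jj by simp
    ultimately show False using pj Sl_disj by blast
  next
    case True
    then have "p \<in> S_leaf (cr s) \<or> (\<exists>t\<in>jk s - {v}. p \<in> S_leaf t) \<or> (\<exists>n. n \<notin> good v \<and> p \<in> S_leaf (v @ [n]))"
      using p(2) \<open>isJ s\<close> unfolding nxt_def W_def v_def by auto
    then show False
    proof (elim disjE exE bexE conjE)
      assume "p \<in> S_leaf (cr s)" then show False using Inv_disj[OF inv vJ] pv by blast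
    next
      fix t assume "t \<in> jk s - {v}" "p \<in> S_leaf t"
      then show False using Inv_disj2[OF inv vJ, of t] pv by blast
    next
      fix n assume "n \<notin> good v" "p \<in> S_leaf (v @ [n])"
      moreover have "gen v (j - 1) \<in> good v" by (rule gen_good)
      ultimately show False using pj Sl_disj by (metis disjoint_iff)
    qed
  qed
next
  case False
  define c where "c = cr s"
  have pj: "p \<in> S_leaf (c @ [gen c j])" using p(1) False j by (simp add: nxt_def W_def c_def)
  then have pv: "p \<in> S_leaf c" using Sl_snoc by blast
  show False
  proof (cases "j' = 0")
    case False
    then have "p \<in> S_leaf (c @ [gen c j'])" using p(2) \<open>\<not> isJ s\<close> by (simp add: nxt_def W_def c_def)
    moreover have "gen c j \<noteq> gen c j'" using gen_inj jj by simp
    ultimately show False using pj Sl_disj by blast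
  next
    case True
    then have "p \<in> S_leaf (c @ [gen c 0]) \<or> (\<exists>t\<in>jk s. p \<in> S_leaf t) \<or> (\<exists>n. n \<notin> good c \<and> p \<in> S_leaf (c @ [n]))"
      using p(2) \<open>\<not> isJ s\<close> unfolding nxt_def W_def c_def by auto
    then show False
    proof (elim disjE exE bexE conjE)
      assume "p \<in> S_leaf (c @ [gen c 0])"
      moreover have "gen c j \<noteq> gen c 0" using gen_inj j by simp
      ultimately show False using pj Sl_disj by blast
    next
      fix t assume "t \<in> jk s" "p \<in> S_leaf t"
      then show False using Inv_disj[OF inv, of t] pv by (auto simp: c_def)
    next
      fix n assume "n \<notin> good c" "p \<in> S_leaf (c @ [n])"
      moreover have "gen c j \<in> good c" by (rule gen_good)
      ultimately show False using pj Sl_disj by (metis disjoint_iff)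
    qed
  qed
qed

lemma W_disj: "Inv s \<Longrightarrow> j \<noteq> j' \<Longrightarrow> W (nxt s j) \<inter> W (nxt s j') = {}"
proof -
  assume inv: "Inv s" and jj: "j \<noteq> j'"
  show ?thesis
  proof (rule ccontr)
    assume "W (nxt s j) \<inter> W (nxt s j') \<noteq> {}"
    then obtain p where p: "p \<in> W (nxt s j)" "p \<in> W (nxt s j')" by blast
    show False
    proof (cases "0 < j")
      case True then show False using W_disj0[OF inv True p jj] by blast
    next
      case False then have "0 < j'" using jj by simp
      then show False using W_disj0[OF inv _ p(2) p(1)] jj by metis
    qed
  qed
qed


definition root :: stt where "root = St [] {} 0"

lemma Inv_root: "Inv root" by (simp add: Inv_def root_def)

lemma Inv_single: "Inv (St c {} m)" by (simp add: Inv_def)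

lemma Inv_nxt: assumes inv: "Inv s" shows "Inv (nxt s j)"
proof (cases "isJ s")
  case True
  define v where "v = ee (ck s)"
  have vJ: "v \<in> jk s" using True by (simp add: isJ_def v_def)
  show ?thesis
  proof (cases "j = 0")
    case False then show ?thesis using True by (simp add: nxt_def Inv_single)
  next
    case j0: True
    define B where "B = {v @ [n] |n. n \<notin> good v}"
    have nx: "nxt s j = St (cr s) (jk s - {v} \<union> B) (Suc (ck s))"
      using True j0 by (simp add: nxt_def v_def B_def)
    have cv: "cr s \<noteq> v" using inv vJ by (auto simp: Inv_def)
    have Bsub: "b \<in> B \<Longrightarrow> prefix v b" for b by (auto simp: B_def)
    have notB: "a \<notin> B" if "a \<in> insert (cr s) (jk s - {v})" for a
    proof
      assume "a \<in> B"
      then have "prefix v a" by (rule Bsub)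
      moreover have "S_leaf v \<inter> S_leaf a = {}"
        using that inv vJ cv unfolding Inv_def by blast
      ultimately show False using prefix_not_disj by blast
    qed
    define \<pi> where "\<pi> a = (if a \<in> B then v else a)" for a
    have pw: "\<forall>a\<in>insert (cr s) (jk s - {v} \<union> B). \<forall>b\<in>insert (cr s) (jk s - {v} \<union> B).
                a \<noteq> b \<longrightarrow> S_leaf a \<inter> S_leaf b = {}"
    proof (rule disj_lift[where P="insert (cr s) (jk s)" and \<pi>=\<pi>])
      show "\<forall>a\<in>insert (cr s) (jk s). \<forall>b\<in>insert (cr s) (jk s). a \<noteq> b \<longrightarrow> S_leaf a \<inter> S_leaf b = {}"
        using inv by (simp add: Inv_def)
    next
      fix a assume "a \<in> insert (cr s) (jk s - {v} \<union> B)"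
      then show "\<pi> a \<in> insert (cr s) (jk s) \<and> prefix (\<pi> a) a"
        using vJ Bsub by (auto simp: \<pi>_def)
    next
      fix a b assume ab: "a \<in> insert (cr s) (jk s - {v} \<union> B)" "b \<in> insert (cr s) (jk s - {v} \<union> B)"
        "a \<noteq> b" "\<pi> a = \<pi> b"
      show "\<exists>x y. x \<noteq> y \<and> a = \<pi> a @ [x] \<and> b = \<pi> a @ [y]"
      proof (cases "a \<in> B")
        case True
        then have "b \<in> B"
          using ab notB cv by (auto simp: \<pi>_def split: if_splits)
        then show ?thesis using True ab by (auto simp: B_def \<pi>_def)
      next
        case False
        then have "b \<notin> B" using ab notB cv
          by (auto simp: \<pi>_def split: if_splits)
        then show ?thesis using False ab by (simp add: \<pi>_def)
      qed
    qed
    have cB: "cr s \<notin> B" using notB by blast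
    have "cr s \<notin> jk s" using inv by (simp add: Inv_def)
    moreover have "\<forall>t\<in>jk s - {v} \<union> B. kk t \<noteq> \<infinity>"
      using inv bad_kk unfolding Inv_def B_def by auto
    ultimately show ?thesis using pw cB nx by (simp add: Inv_def)
  qed
next
  case False
  define c where "c = cr s"
  show ?thesis
  proof (cases "j = 0")
    case j0: False then show ?thesis using False by (simp add: nxt_def Inv_single)
  next
    case j0: True
    define B where "B = {c @ [n] |n. n \<notin> good c}"
    define c' where "c' = c @ [gen c 0]"
    have nx: "nxt s j = St c' (jk s \<union> B) (Suc (ck s))"
      using False j0 by (simp add: nxt_def c_def B_def c'_def)
    have Bsub: "b \<in> B \<Longrightarrow> prefix c b" for b by (auto simp: B_def)
    have notJ: "a \<notin> jk s" if "prefix c a" for a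
    proof
      assume "a \<in> jk s"
      then have "S_leaf a \<inter> S_leaf c = {}" using Inv_disj[OF inv] by (simp add: c_def)
      then show False using prefix_not_disj[OF that] by blast
    qed
    have c'B: "c' \<notin> B" using gen_good[of c 0] by (auto simp: B_def c'_def)
    have c'J: "c' \<notin> jk s" using notJ by (simp add: c'_def)
    define \<pi> where "\<pi> a = (if a \<in> jk s then a else c)" for a
    have pw: "\<forall>a\<in>insert c' (jk s \<union> B). \<forall>b\<in>insert c' (jk s \<union> B).
                a \<noteq> b \<longrightarrow> S_leaf a \<inter> S_leaf b = {}"
    proof (rule disj_lift[where P="insert (cr s) (jk s)" and \<pi>=\<pi>])
      show "\<forall>a\<in>insert (cr s) (jk s). \<forall>b\<in>insert (cr s) (jk s). a \<noteq> b \<longrightarrow> S_leaf a \<inter> S_leaf b = {}"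
        using inv by (simp add: Inv_def)
    next
      fix a assume "a \<in> insert c' (jk s \<union> B)"
      then show "\<pi> a \<in> insert (cr s) (jk s) \<and> prefix (\<pi> a) a"
        using Bsub by (auto simp: \<pi>_def c_def c'_def)
    next
      fix a b assume ab: "a \<in> insert c' (jk s \<union> B)" "b \<in> insert c' (jk s \<union> B)"
        "a \<noteq> b" "\<pi> a = \<pi> b"
      have BJ: "x \<in> B \<Longrightarrow> x \<notin> jk s" for x using notJ Bsub by blast
      show "\<exists>x y. x \<noteq> y \<and> a = \<pi> a @ [x] \<and> b = \<pi> a @ [y]"
      proof (cases "a \<in> jk s")
        case True
        then have "b \<in> jk s"
          using ab c'J BJ notJ by (auto simp: \<pi>_def split: if_splits)
        then show ?thesis using True ab by (simp add: \<pi>_def)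
      next
        case False
        then have "b \<notin> jk s" using ab notJ
          by (auto simp: \<pi>_def split: if_splits)
        have ac: "\<exists>x. a = c @ [x]" using ab(1) False by (auto simp: c'_def B_def)
        have bc: "\<exists>x. b = c @ [x]" using ab(2) \<open>b \<notin> jk s\<close> by (auto simp: c'_def B_def)
        show ?thesis using ac bc ab(3) False \<open>b \<notin> jk s\<close> by (auto simp: \<pi>_def)
      qed
    qed
    have "\<forall>t\<in>jk s \<union> B. kk t \<noteq> \<infinity>"
      using inv bad_kk unfolding Inv_def B_def by auto
    then show ?thesis using pw c'B c'J nx by (simp add: Inv_def)
  qed
qed

definition st :: "nat list \<Rightarrow> stt" where "st x = foldl nxt root x"

lemma st_snoc: "st (x @ [j]) = nxt (st x) j" by (simp add: st_def)
lemma st_Nil: "st [] = root" by (simp add: st_def)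

lemma Inv_st: "Inv (st x)"
  by (induction x rule: rev_induct) (simp_all add: st_Nil Inv_root st_snoc Inv_nxt)

lemma ck_nxt: "ck (nxt s j) = Suc (ck s)" by (simp add: nxt_def)

lemma ck_st: "ck (st x) = length x"
  by (induction x rule: rev_induct) (simp_all add: st_Nil root_def st_snoc ck_nxt)

lemma W_root: "W root = UNIV"
  by (simp add: W_def root_def S_leaf_def)

definition lf :: "nat list \<Rightarrow> (nat \<Rightarrow> nat) set" where "lf x = Y \<inter> W (st x)"

lemma open_W: "open (W s)"
  unfolding W_def using open_Sl by (intro open_Un open_Union) auto


definition R :: "nat list \<Rightarrow> nat list \<Rightarrow> bool" where
  "R a a' \<longleftrightarrow> strict_prefix a a' \<and> (kk a' = \<infinity> \<or> kk a < kk a')"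

lemma R_prefix_right: assumes "R a b" "prefix b b'" shows "R a b'"
proof -
  have "strict_prefix a b'" using assms unfolding R_def
    using prefix_order.less_le_trans by blast
  moreover have "kk b \<le> kk b'" using kk_mono[OF assms(2)] .
  then have "kk b' = \<infinity> \<or> kk a < kk b'" using assms(1) unfolding R_def
    by (metis enat_ord_code(3) order_less_le_trans top.extremum_unique top_enat_def)
  ultimately show ?thesis by (simp add: R_def)
qed

lemma R_prefix_left: assumes "prefix a0 a" "R a b" shows "R a0 b"
proof -
  have "strict_prefix a0 b" using assms unfolding R_def
    using prefix_order.le_less_trans by blast
  moreover have "kk a0 \<le> kk a" using kk_mono[OF assms(1)] .
  then have "kk b = \<infinity> \<or> kk a0 < kk b" using assms(2) unfolding R_def by auto
  ultimately show ?thesis by (simp add: R_def)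
qed

lemma prefix_nth_eq: "prefix x z \<Longrightarrow> prefix y z \<Longrightarrow> k < length x \<Longrightarrow> k < length y \<Longrightarrow> x ! k = y ! k"
  by (metis nth_append prefix_def)

lemma chain_limit:
  assumes RR: "\<And>i. R (a i) (a (Suc i))"
  shows "\<exists>q\<in>Y. (\<Inter>i. S_leaf (a i)) = {q}"
proof -
  have kkge: "enat i \<le> kk (a i)" for i
  proof (induction i)
    case (Suc i)
    from RR[of i] have "kk (a (Suc i)) = \<infinity> \<or> kk (a i) < kk (a (Suc i))" by (simp add: R_def)
    then show ?case
    proof
      assume "kk (a i) < kk (a (Suc i))"
      then have "enat i < kk (a (Suc i))" using Suc.IH by (meson order_le_less_trans)
      then show ?case by (simp add: Suc_ile_eq)
    qed simp
  qed (simp add: zero_enat_def[symmetric])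
  have lenge: "i \<le> length (a i)" for i
  proof (induction i)
    case (Suc i)
    from RR[of i] have "length (a i) < length (a (Suc i))" by (simp add: R_def prefix_length_less)
    then show ?case using Suc.IH by simp
  qed simp
  have pmono: "prefix (a i) (a (i + d))" for i d
  proof (induction d)
    case (Suc d)
    from RR[of "i + d"] have "prefix (a (i + d)) (a (Suc (i + d)))" by (simp add: R_def strict_prefix_def)
    then show ?case using Suc.IH by simp
  qed simp
  have pm: "prefix (a i) (a j)" if "i \<le> j" for i j
    using pmono[of i "j - i"] that by simp
  define q where "q k = a (Suc k) ! k" for k
  have qin: "q \<in> S_leaf (a i)" for i
  proof (unfold Sl_iff, intro allI impI)
    fix k assume k: "k < length (a i)"
    have k2: "k < length (a (Suc k))" using lenge[of "Suc k"] by simp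
    show "q k = a i ! k" unfolding q_def
      using prefix_nth_eq[OF pm[of "Suc k" "max i (Suc k)"] pm[of i "max i (Suc k)"] k2 k] by simp
  qed
  have uniq: "p = q" if "\<forall>i. p \<in> S_leaf (a i)" for p
  proof
    fix k
    have "p \<in> S_leaf (a (Suc k))" using that by blast
    then show "p k = q k" using lenge[of "Suc k"] by (simp add: Sl_iff q_def)
  qed
  have qY: "q \<in> Y"
  proof -
    have "q \<in> U K" for K
    proof -
      have "enat K < kk (a (Suc K))" using kkge[of "Suc K"] by (simp add: Suc_ile_eq)
      then have "S_leaf (a (Suc K)) \<subseteq> U K" by (rule kk_less)
      then show ?thesis using qin by blast
    qed
    then show ?thesis by (simp add: Y_def)
  qed
  have "(\<Inter>i. S_leaf (a i)) = {q}" using qin uniq by blast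
  then show ?thesis using qY by blast
qed

definition sb :: "(nat \<Rightarrow> nat) \<Rightarrow> nat \<Rightarrow> stt" where "sb b n = st (map b [0..<n])"

lemma sb_Suc: "sb b (Suc n) = nxt (sb b n) (b n)"
  by (simp add: sb_def st_snoc)

lemma sb_0: "sb b 0 = root" by (simp add: sb_def st_Nil)

lemma ck_sb: "ck (sb b n) = n" by (simp add: sb_def ck_st)

lemma Inv_sb: "Inv (sb b n)" by (simp add: sb_def Inv_st)

lemma W_sb_mono: "n \<le> n' \<Longrightarrow> W (sb b n') \<subseteq> W (sb b n)"
proof (induction n' rule: dec_induct)
  case (step k)
  then show ?case using W_nxt_sub[of "sb b k" "b k"] by (simp add: sb_Suc)
qed simp

lemma nxt_pos: assumes "j \<noteq> 0"
  shows "jk (nxt s j) = {} \<and> (\<exists>w\<in>insert (cr s) (jk s). \<exists>g\<in>good w. cr (nxt s j) = w @ [g])"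
  using assms gen_good by (auto simp: nxt_def isJ_def)

lemma nxt_zero_pieces: assumes "w \<in> insert (cr (nxt s 0)) (jk (nxt s 0))" shows "\<exists>w'\<in>insert (cr s) (jk s). prefix w' w"
proof (cases "isJ s")
  case True
  then have "ee (ck s) \<in> jk s" by (simp add: isJ_def)
  then show ?thesis using assms True by (auto simp: nxt_def)
next
  case False
  then show ?thesis using assms by (auto simp: nxt_def)
qed

lemma reset_step:
  assumes J0: "jk (sb b n) = {}" and ex: "\<exists>k\<ge>n. b k \<noteq> 0"
  shows "\<exists>n'>n. jk (sb b n') = {} \<and> R (cr (sb b n)) (cr (sb b n'))"
proof -
  define k where "k = (LEAST k. n \<le> k \<and> b k \<noteq> 0)"
  have k: "n \<le> k" "b k \<noteq> 0" using LeastI_ex[OF ex[unfolded Bex_def[symmetric]]] unfolding k_def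
    by (metis (mono_tags, lifting) LeastI_ex ex)+
  have z: "b k' = 0" if "n \<le> k'" "k' < k" for k'
    using not_less_Least[of k' "\<lambda>k. n \<le> k \<and> b k \<noteq> 0"] that unfolding k_def by blast
  define c where "c = cr (sb b n)"
  have ext: "\<forall>w\<in>insert (cr (sb b (n + d))) (jk (sb b (n + d))). prefix c w" if "n + d \<le> k" for d
    using that
  proof (induction d)
    case 0 then show ?case using J0 by (simp add: c_def)
  next
    case (Suc d)
    have "b (n + d) = 0" using z Suc.prems by simp
    then have eq: "sb b (n + Suc d) = nxt (sb b (n + d)) 0" by (simp add: sb_Suc)
    show ?case
    proof
      fix w assume "w \<in> insert (cr (sb b (n + Suc d))) (jk (sb b (n + Suc d)))"
      then obtain w' where "w' \<in> insert (cr (sb b (n + d))) (jk (sb b (n + d)))" "prefix w' w"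
        using nxt_zero_pieces eq by metis
      moreover have "\<forall>a\<in>insert (cr (sb b (n + d))) (jk (sb b (n + d))). prefix c a"
        using Suc.IH Suc.prems by simp
      ultimately show "prefix c w" using prefix_order.order_trans by blast
    qed
  qed
  have extk: "\<forall>w\<in>insert (cr (sb b k)) (jk (sb b k)). prefix c w"
    using ext[of "k - n"] k by simp
  have eqk: "sb b (Suc k) = nxt (sb b k) (b k)" by (simp add: sb_Suc)
  obtain w g where wg: "w \<in> insert (cr (sb b k)) (jk (sb b k))" "g \<in> good w"
    "cr (sb b (Suc k)) = w @ [g]" "jk (sb b (Suc k)) = {}"
    using nxt_pos[OF k(2), of "sb b k"] eqk by metis
  have cw: "prefix c w" using extk wg by blast
  have "R w (w @ [g])" using kk_good[OF wg(2)] by (simp add: R_def strict_prefix_def)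
  then have "R c (w @ [g])" using R_prefix_left[OF cw] by blast
  then show ?thesis using wg k by (intro exI[of _ "Suc k"]) (auto simp: c_def)
qed


lemma fruit_B:
  assumes inf: "\<forall>N. \<exists>k\<ge>N. b k \<noteq> 0"
  shows "\<exists>q. Y \<inter> (\<Inter>n. W (sb b n)) = {q}"
proof -
  have "\<forall>n. \<exists>n'. jk (sb b n) = {} \<longrightarrow> (n < n' \<and> jk (sb b n') = {} \<and> R (cr (sb b n)) (cr (sb b n')))"
  proof
    fix n
    show "\<exists>n'. jk (sb b n) = {} \<longrightarrow> (n < n' \<and> jk (sb b n') = {} \<and> R (cr (sb b n)) (cr (sb b n')))"
    proof (cases "jk (sb b n) = {}")
      case True
      have "\<exists>k\<ge>n. b k \<noteq> 0" using inf by blast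
      from reset_step[OF True this] show ?thesis by blast
    qed blast
  qed
  then have "\<exists>f. \<forall>n. jk (sb b n) = {} \<longrightarrow> (n < f n \<and> jk (sb b (f n)) = {} \<and> R (cr (sb b n)) (cr (sb b (f n))))"
    by (rule choice)
  then obtain f where f0: "\<forall>n. jk (sb b n) = {} \<longrightarrow> (n < f n \<and> jk (sb b (f n)) = {} \<and> R (cr (sb b n)) (cr (sb b (f n))))"
    by blast
  have f: "\<And>n. jk (sb b n) = {} \<Longrightarrow> n < f n \<and> jk (sb b (f n)) = {} \<and> R (cr (sb b n)) (cr (sb b (f n)))"
    using f0 by blast
  define r where "r i = (f ^^ i) 0" for i
  have rS: "r (Suc i) = f (r i)" for i by (simp add: r_def)
  have rJ: "jk (sb b (r i)) = {}" for i
  proof (induction i)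
    case 0 then show ?case by (simp add: r_def sb_0 root_def)
  next
    case (Suc i) then show ?case using f rS by simp
  qed
  have rR: "R (cr (sb b (r i))) (cr (sb b (r (Suc i))))" for i using f[OF rJ[of i]] rS by simp
  have rge: "i \<le> r i" for i
  proof (induction i)
    case (Suc i) then show ?case using f[OF rJ[of i]] rS by simp
  qed simp
  define a where "a i = cr (sb b (r i))" for i
  obtain q where q: "q \<in> Y" "(\<Inter>i. S_leaf (a i)) = {q}"
    using chain_limit[of a] rR unfolding a_def by blast
  have Wr: "W (sb b (r i)) = S_leaf (a i)" for i using rJ by (simp add: W_def a_def)
  have "Y \<inter> (\<Inter>n. W (sb b n)) = {q}"
  proof
    show "Y \<inter> (\<Inter>n. W (sb b n)) \<subseteq> {q}"
    proof
      fix x assume x: "x \<in> Y \<inter> (\<Inter>n. W (sb b n))"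
      have "x \<in> S_leaf (a i)" for i
      proof -
        have "x \<in> W (sb b (r i))" using x by blast
        then show ?thesis using Wr by simp
      qed
      then have "x \<in> (\<Inter>i. S_leaf (a i))" by blast
      then show "x \<in> {q}" using q by simp
    qed
    show "{q} \<subseteq> Y \<inter> (\<Inter>n. W (sb b n))"
    proof -
      have "q \<in> W (sb b n)" for n
      proof -
        have "q \<in> S_leaf (a n)" using q by blast
        then have "q \<in> W (sb b (r n))" using Wr by simp
        then show ?thesis using W_sb_mono[OF rge[of n]] by blast
      qed
      then show ?thesis using q by blast
    qed
  qed
  then show ?thesis by blast
qed

lemma jk_nxt0: "jk (nxt s 0) = (if isJ s then jk s - {ee (ck s)} \<union> {ee (ck s) @ [n] |n. n \<notin> good (ee (ck s))}
    else jk s \<union> {cr s @ [n] |n. n \<notin> good (cr s)})"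
  by (simp add: nxt_def)

lemma junk_step:
  assumes z: "\<forall>n\<ge>N. b n = 0" and nN: "N \<le> n" and t: "t \<in> jk (sb b n)" and xt: "x \<in> S_leaf t"
    and xall: "\<forall>n. x \<in> W (sb b n)"
  shows "\<exists>n' t'. N \<le> n' \<and> t' \<in> jk (sb b n') \<and> strict_prefix t t' \<and> x \<in> S_leaf t' \<and> kk t' = kk t"
proof -
  have ex: "\<exists>m. n \<le> m \<and> odd m \<and> ee m = t" using ee_often by blast
  define m where "m = (LEAST m. n \<le> m \<and> odd m \<and> ee m = t)"
  have m: "n \<le> m" "odd m" "ee m = t" using LeastI_ex[OF ex] unfolding m_def by blast+
  have nm: "\<not> (odd k \<and> ee k = t)" if "n \<le> k" "k < m" for k
    using not_less_Least[of k "\<lambda>m. n \<le> m \<and> odd m \<and> ee m = t"] that unfolding m_def by blast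
  have stay: "t \<in> jk (sb b (n + d))" if "n + d \<le> m" for d
    using that
  proof (induction d)
    case 0 then show ?case using t by simp
  next
    case (Suc d)
    have "b (n + d) = 0" using z nN by simp
    then have eq: "sb b (n + Suc d) = nxt (sb b (n + d)) 0" by (simp add: sb_Suc)
    have tin: "t \<in> jk (sb b (n + d))" using Suc by simp
    have "\<not> (isJ (sb b (n + d)) \<and> ee (n + d) = t)"
      using nm[of "n + d"] Suc.prems by (auto simp: isJ_def ck_sb)
    then show ?case using tin eq jk_nxt0[of "sb b (n + d)"] by (auto simp: ck_sb)
  qed
  have tm: "t \<in> jk (sb b m)" using stay[of "m - n"] m by simp
  have isj: "isJ (sb b m)" using tm m by (simp add: isJ_def ck_sb)
  have "b m = 0" using z nN m by simp
  then have eqm: "sb b (Suc m) = nxt (sb b m) 0" by (simp add: sb_Suc)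
  have xW: "x \<in> W (nxt (sb b m) 0)" using xall eqm by metis
  have inv: "Inv (sb b m)" by (rule Inv_sb)
  have "x \<in> S_leaf (cr (sb b m)) \<or> (\<exists>t''\<in>jk (sb b m) - {t}. x \<in> S_leaf t'') \<or>
        (\<exists>n'. n' \<notin> good t \<and> x \<in> S_leaf (t @ [n']))"
    using xW isj m(3) unfolding nxt_def W_def by (auto simp: ck_sb)
  then obtain n' where n': "n' \<notin> good t" "x \<in> S_leaf (t @ [n'])"
  proof (elim disjE bexE exE conjE)
    assume "x \<in> S_leaf (cr (sb b m))"
    then have False using Inv_disj[OF inv tm] xt by blast
    then show ?thesis ..
  next
    fix t'' assume "t'' \<in> jk (sb b m) - {t}" "x \<in> S_leaf t''"
    then have False using Inv_disj2[OF inv tm, of t''] xt by blast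
    then show ?thesis ..
  qed
  have "t @ [n'] \<in> jk (sb b (Suc m))"
    using eqm jk_nxt0[of "sb b m"] isj m(3) n'(1) by (auto simp: ck_sb)
  moreover have "kk (t @ [n']) = kk t" using bad_kk[OF n'(1)] by simp
  moreover have "N \<le> Suc m" using nN m by simp
  ultimately show ?thesis using n'(2) by (intro exI[of _ "Suc m"] exI[of _ "t @ [n']"]) (auto simp: strict_prefix_def)
qed

lemma junk_chain:
  assumes z: "\<forall>n\<ge>N. b n = 0" and nN: "N \<le> n" and t: "t \<in> jk (sb b n)" and xt: "x \<in> S_leaf t"
    and xall: "\<forall>n. x \<in> W (sb b n)"
  shows "\<exists>n' t'. N \<le> n' \<and> t' \<in> jk (sb b n') \<and> L \<le> length t' \<and> x \<in> S_leaf t' \<and> kk t' = kk t"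
proof (induction L)
  case 0 then show ?case using nN t xt by blast
next
  case (Suc L)
  then obtain n1 t1 where h: "N \<le> n1" "t1 \<in> jk (sb b n1)" "L \<le> length t1" "x \<in> S_leaf t1" "kk t1 = kk t"
    by blast
  from junk_step[OF z h(1) h(2) h(4) xall] obtain n2 t2 where
    h2: "N \<le> n2" "t2 \<in> jk (sb b n2)" "strict_prefix t1 t2" "x \<in> S_leaf t2" "kk t2 = kk t1" by blast
  have "length t1 < length t2" using h2(3) by (simp add: prefix_length_less)
  then show ?case using h h2 by (intro exI[of _ n2] exI[of _ t2]) simp
qed

lemma no_bad_chain:
  assumes xY: "x \<in> Y" and K: "kk t = enat K"
    and ch: "\<And>L. \<exists>t'. L \<le> length t' \<and> x \<in> S_leaf t' \<and> kk t' = kk t"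
  shows False
proof -
  have "x \<in> U K" using xY by (simp add: Y_def)
  from open_nbhd[OF opn this] obtain L where L: "S_leaf (map x [0..<L]) \<subseteq> U K" by blast
  from ch[of L] obtain t' where t': "L \<le> length t'" "x \<in> S_leaf t'" "kk t' = kk t" by blast
  have "t' = map x [0..<length t']" using Sl_eq_map[OF t'(2)] .
  then have "prefix (map x [0..<L]) t'" using prefix_map_upt[OF t'(1)] by metis
  then have "S_leaf t' \<subseteq> U K" using L Sl_prefix by blast
  moreover have "\<not> S_leaf t' \<subseteq> U K" using kk_eq t'(3) K by simp
  ultimately show False by blast
qed


lemma cr_nxt0_prefix: "prefix (cr s) (cr (nxt s 0))"
  by (simp add: nxt_def)

lemma fruit_A:
  assumes z: "\<forall>n\<ge>N. b n = 0"
  shows "\<exists>q. Y \<inter> (\<Inter>n. W (sb b n)) = {q}"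
proof -
  define a where "a i = cr (sb b (2 * N + 2 * i))" for i
  have crs: "cr (sb b (Suc n)) = cr (nxt (sb b n) 0)" if "N \<le> n" for n
    using z that by (simp add: sb_Suc)
  have aR: "R (a i) (a (Suc i))" for i
  proof -
    define m where "m = 2 * N + 2 * i"
    have nJ: "\<not> isJ (sb b m)" by (simp add: isJ_def ck_sb m_def)
    have c1: "cr (sb b (Suc m)) = a i @ [gen (a i) 0]"
      using crs[of m] nJ by (simp add: m_def a_def nxt_def)
    have "R (a i) (cr (sb b (Suc m)))" using c1 kk_good[OF gen_good[of "a i" 0]]
      by (simp add: R_def strict_prefix_def)
    moreover have "prefix (cr (sb b (Suc m))) (cr (sb b (Suc (Suc m))))"
      using crs[of "Suc m"] cr_nxt0_prefix by (simp add: m_def)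
    moreover have "Suc (Suc m) = 2 * N + 2 * Suc i" by (simp add: m_def)
    ultimately show ?thesis using R_prefix_right unfolding a_def by metis
  qed
  obtain q where q: "q \<in> Y" "(\<Inter>i. S_leaf (a i)) = {q}"
    using chain_limit[of a] aR by blast
  have qW: "q \<in> W (sb b n)" for n
  proof -
    have "q \<in> S_leaf (a n)" using q by blast
    then have "q \<in> W (sb b (2 * N + 2 * n))" by (simp add: W_def a_def)
    then show ?thesis using W_sb_mono[of n "2 * N + 2 * n"] by auto
  qed
  have "Y \<inter> (\<Inter>n. W (sb b n)) = {q}"
  proof
    show "{q} \<subseteq> Y \<inter> (\<Inter>n. W (sb b n))" using q qW by blast
    show "Y \<inter> (\<Inter>n. W (sb b n)) \<subseteq> {q}"
    proof
      fix x assume x: "x \<in> Y \<inter> (\<Inter>n. W (sb b n))"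
      show "x \<in> {q}"
      proof (rule ccontr)
        assume "x \<notin> {q}"
        then obtain i where xi: "x \<notin> S_leaf (a i)" using q by blast
        define n0 where "n0 = 2 * N + 2 * i"
        have "x \<in> W (sb b n0)" using x by blast
        then obtain t where t: "t \<in> jk (sb b n0)" "x \<in> S_leaf t"
          using xi by (auto simp: W_def a_def n0_def)
        have "kk t \<noteq> \<infinity>" using Inv_sb[of b n0] t(1) by (simp add: Inv_def)
        then obtain K where K: "kk t = enat K" by (cases "kk t") auto
        have xall: "\<forall>n. x \<in> W (sb b n)" using x by blast
        have "\<exists>t'. L \<le> length t' \<and> x \<in> S_leaf t' \<and> kk t' = kk t" for L
          using junk_chain[OF z _ t(1) t(2) xall, of L] by (auto simp: n0_def)
        then show False using no_bad_chain[OF _ K] x by blast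
      qed
    qed
  qed
  then show ?thesis by blast
qed

lemma fruit_sb: "\<exists>q. Y \<inter> (\<Inter>n. W (sb b n)) = {q}"
proof (cases "\<exists>N. \<forall>n\<ge>N. b n = 0")
  case True then show ?thesis using fruit_A by blast
next
  case False
  then have "\<forall>N. \<exists>k\<ge>N. b k \<noteq> 0" by blast
  then show ?thesis by (rule fruit_B)
qed


lemma lf_ne: "lf z \<noteq> {}"
proof -
  define b where "b i = (if i < length z then z ! i else 0)" for i
  have "map b [0..<length z] = z"
  proof (rule nth_equalityI)
    show "length (map b [0..<length z]) = length z" by simp
    fix i assume "i < length (map b [0..<length z])"
    then show "map b [0..<length z] ! i = z ! i" by (simp add: b_def)
  qed
  then have eq: "sb b (length z) = st z" by (simp add: sb_def)
  obtain q where q: "Y \<inter> (\<Inter>n. W (sb b n)) = {q}" using fruit_sb[of b] by (elim exE)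
  then have "q \<in> Y \<inter> (\<Inter>n. W (sb b n))" by simp
  then have "q \<in> Y \<inter> W (sb b (length z))" by simp
  then have "q \<in> lf z" using eq by (simp add: lf_def)
  then show ?thesis by blast
qed

definition proc :: "stt \<Rightarrow> nat list \<Rightarrow> bool" where
  "proc s w \<longleftrightarrow> (isJ s \<and> ee (ck s) = w) \<or> (\<not> isJ s \<and> cr s = w)"

lemma junk_processed:
  assumes "length x + k = m0" "odd m0" "ee m0 = w" "w \<in> jk (st x)" "p \<in> S_leaf w"
  shows "\<exists>x'. p \<in> W (st x') \<and> proc (st x') w"
  using assms
proof (induction k arbitrary: x)
  case 0
  then have "proc (st x) w" by (simp add: proc_def isJ_def ck_st)
  moreover have "p \<in> W (st x)" using 0 by (auto simp: W_def)
  ultimately show ?case by blast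
next
  case (Suc k)
  show ?case
  proof (cases "proc (st x) w")
    case True
    moreover have "p \<in> W (st x)" using Suc by (auto simp: W_def)
    ultimately show ?thesis by blast
  next
    case False
    then have "\<not> (isJ (st x) \<and> ee (ck (st x)) = w)" by (simp add: proc_def)
    then have w0: "w \<in> jk (st (x @ [0]))" using Suc.prems(4) unfolding st_snoc jk_nxt0 by auto
    have l0: "length (x @ [0]) + k = m0" using Suc.prems(1) by simp
    show ?thesis using Suc.IH[OF l0 Suc.prems(2) Suc.prems(3) w0 Suc.prems(5)] .
  qed
qed

lemma piece_processed:
  assumes "w \<in> insert (cr (st x)) (jk (st x))" "p \<in> S_leaf w"
  shows "\<exists>x'. p \<in> W (st x') \<and> proc (st x') w"
proof (cases "w \<in> jk (st x)")
  case True
  obtain m0 where m0: "m0 \<ge> length x" "odd m0" "ee m0 = w" using ee_often by blast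
  show ?thesis
    using junk_processed[of x "m0 - length x" m0 w p] m0 True assms(2) by simp
next
  case False
  then have w: "w = cr (st x)" using assms(1) by simp
  show ?thesis
  proof (cases "proc (st x) w")
    case True
    then show ?thesis using assms(2) w by (auto simp: W_def)
  next
    case nP: False
    then have isj: "isJ (st x)" using w by (simp add: proc_def)
    have "cr (st (x @ [0])) = w" using isj w by (simp add: st_snoc nxt_def)
    moreover have "\<not> isJ (st (x @ [0]))" using isj by (simp add: isJ_def ck_st)
    ultimately have "proc (st (x @ [0])) w" by (simp add: proc_def)
    moreover have "p \<in> W (st (x @ [0]))" using assms(2) \<open>cr (st (x @ [0])) = w\<close> by (simp add: W_def)
    ultimately show ?thesis by blast
  qed
qed

lemma proc_child:
  assumes "proc (st x) y" "p \<in> S_leaf (y @ [a])"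
  shows "\<exists>j. y @ [a] \<in> insert (cr (st (x @ [j]))) (jk (st (x @ [j])))"
proof (cases "a \<in> good y")
  case True
  then obtain j where j: "a = gen y j" using gen_range by (metis imageE)
  show ?thesis
  proof (cases "isJ (st x)")
    case True
    then have "cr (st (x @ [Suc j])) = y @ [a]" using assms j by (simp add: st_snoc nxt_def proc_def)
    then show ?thesis by (intro exI[of _ "Suc j"]) simp
  next
    case False
    then have "cr (st (x @ [j])) = y @ [a]" using assms j by (simp add: st_snoc nxt_def proc_def)
    then show ?thesis by (intro exI[of _ j]) simp
  qed
next
  case False
  then have "y @ [a] \<in> jk (st (x @ [0]))" using assms
    by (auto simp: st_snoc jk_nxt0 proc_def)
  then show ?thesis by (intro exI[of _ 0]) simp
qed

lemma prefixes_processed: "\<exists>x. p \<in> W (st x) \<and> proc (st x) (map p [0..<n])"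
proof (induction n)
  case 0
  have "proc (st []) []" by (simp add: st_Nil root_def proc_def isJ_def)
  moreover have "p \<in> W (st [])" by (simp add: st_Nil W_root)
  ultimately show ?case by auto
next
  case (Suc n)
  then obtain x where x: "proc (st x) (map p [0..<n])" by blast
  have eq: "map p [0..<Suc n] = map p [0..<n] @ [p n]" by simp
  have pin: "p \<in> S_leaf (map p [0..<Suc n])" by (rule in_Sl_pf)
  obtain j where "map p [0..<n] @ [p n] \<in> insert (cr (st (x @ [j]))) (jk (st (x @ [j])))"
    using proc_child[OF x, of p "p n"] pin eq by metis
  then show ?case using piece_processed[of "map p [0..<n] @ [p n]" "x @ [j]" p] pin eq by metis
qed


lemma sons_eq: "sons UNIV strict_prefix z = range (\<lambda>j. z @ [j])"
proof
  show "range (\<lambda>j. z @ [j]) \<subseteq> sons UNIV strict_prefix z"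
  proof
    fix s assume "s \<in> range (\<lambda>j. z @ [j])"
    then obtain j where s: "s = z @ [j]" by blast
    have "\<not> (strict_prefix z w \<and> strict_prefix w s)" for w
    proof
      assume "strict_prefix z w \<and> strict_prefix w s"
      then have "length z < length w" "length w < length s" using prefix_length_less by blast+
      then show False using s by simp
    qed
    moreover have "strict_prefix z s" using s by (simp add: strict_prefix_def)
    ultimately show "s \<in> sons UNIV strict_prefix z" by (auto simp: sons_def)
  qed
  show "sons UNIV strict_prefix z \<subseteq> range (\<lambda>j. z @ [j])"
  proof
    fix y assume y: "y \<in> sons UNIV strict_prefix z"
    then have sp: "strict_prefix z y" and nb: "\<not> (\<exists>w. strict_prefix z w \<and> strict_prefix w y)"
      by (auto simp: sons_def)
    then obtain r where r: "y = z @ r" "r \<noteq> []" by (auto simp: strict_prefix_def prefix_def)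
    then obtain a r' where ar: "r = a # r'" by (cases r) auto
    show "y \<in> range (\<lambda>j. z @ [j])"
    proof (cases "r' = []")
      case True then show ?thesis using r ar by simp
    next
      case False
      have "strict_prefix z (z @ [a])" by (simp add: strict_prefix_def)
      moreover have "strict_prefix (z @ [a]) y" using r ar False by (simp add: strict_prefix_def)
      ultimately show ?thesis using nb by blast
    qed
  qed
qed

lemma dom_at:
  assumes pr: "proc (st x) y"
  shows "shoot UNIV strict_prefix lf x \<ggreater>\<^sub>f shoot UNIV strict_prefix S_leaf y"
proof -
  define h where "h j = (if isJ (st x) then j else Suc j)" for j
  have h_inj: "h j = h j' \<longleftrightarrow> j = j'" for j j' by (simp add: h_def)
  have lfS: "lf (x @ [Suc j]) = Y \<inter> S_leaf (y @ [gen y (h j)])" for j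
    using pr by (auto simp: lf_def st_snoc nxt_def W_def proc_def h_def)
  show ?thesis unfolding dominates_def
  proof (intro ballI impI)
    fix D assume "D \<in> shoot UNIV strict_prefix S_leaf y" "D \<noteq> {}"
    then obtain C where C: "D = \<Union> (S_leaf ` C)" "C \<subseteq> sons UNIV strict_prefix y"
      "finite (sons UNIV strict_prefix y - C)"
      unfolding shoot_def by blast
    define F where "F = {n. y @ [n] \<notin> C}"
    have "(\<lambda>n. y @ [n]) ` F \<subseteq> sons UNIV strict_prefix y - C"
      by (auto simp: F_def sons_eq)
    then have "finite ((\<lambda>n. y @ [n]) ` F)" using C(3) finite_subset by blast
    moreover have "inj_on (\<lambda>n. y @ [n]) F" by (simp add: inj_on_def)
    ultimately have fF: "finite F" using finite_imageD by blast
    define E where "E = {j. gen y (h j) \<in> F}"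
    have "inj (\<lambda>j. gen y (h j))" by (simp add: inj_def gen_inj h_inj)
    then have fE: "finite E" unfolding E_def using finite_vimageI[OF fF] by (simp add: vimage_def)
    define C' where "C' = (\<lambda>j. x @ [Suc j]) ` (UNIV - E)"
    define G where "G = \<Union> (lf ` C')"
    have C'sub: "C' \<subseteq> sons UNIV strict_prefix x" by (auto simp: C'_def sons_eq)
    have "sons UNIV strict_prefix x - C' \<subseteq> insert (x @ [0]) ((\<lambda>j. x @ [Suc j]) ` E)"
    proof
      fix s assume "s \<in> sons UNIV strict_prefix x - C'"
      then obtain k where k: "s = x @ [k]" "s \<notin> C'" by (auto simp: sons_eq)
      show "s \<in> insert (x @ [0]) ((\<lambda>j. x @ [Suc j]) ` E)"
      proof (cases k)
        case 0 then show ?thesis using k by simp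
      next
        case (Suc j) then show ?thesis using k by (auto simp: C'_def)
      qed
    qed
    then have fin: "finite (sons UNIV strict_prefix x - C')"
      using fE finite_subset by blast
    have Gsh: "G \<in> shoot UNIV strict_prefix lf x"
      unfolding shoot_def G_def using C'sub fin by blast
    have GD: "G \<subseteq> D"
    proof
      fix p assume "p \<in> G"
      then obtain j where j: "j \<notin> E" "p \<in> lf (x @ [Suc j])" by (auto simp: G_def C'_def)
      then have "p \<in> S_leaf (y @ [gen y (h j)])" using lfS by blast
      moreover have "y @ [gen y (h j)] \<in> C" using j(1) by (simp add: E_def F_def)
      ultimately show "p \<in> D" using C(1) by blast
    qed
    obtain j where j: "j \<notin> E" using fE by (meson ex_new_if_finite infinite_UNIV_nat)
    have "lf (x @ [Suc j]) \<subseteq> G" using j by (auto simp: G_def C'_def)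
    then have "G \<noteq> {}" using lf_ne by blast
    then show "\<exists>G\<in>shoot UNIV strict_prefix lf x. G \<noteq> {} \<and> G \<subseteq> D" using Gsh GD by blast
  qed
qed


end

lemma tree_lists: "is_tree (UNIV :: nat list set) strict_prefix"
  unfolding is_tree_def Let_def
proof (intro conjI ballI allI impI)
  fix x :: "nat list" show "\<not> strict_prefix x x" by simp
next
  fix x y z :: "nat list" assume "strict_prefix x y \<and> strict_prefix y z"
  then show "strict_prefix x z" using prefix_order.less_trans by blast
next
  fix x a b :: "nat list" assume "a \<in> {v \<in> UNIV. strict_prefix v x}" "b \<in> {v \<in> UNIV. strict_prefix v x}"
  then have "prefix a x" "prefix b x" by (auto simp: strict_prefix_def)
  then have "prefix a b \<or> prefix b a" by (rule prefix_same_cases)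
  then show "a = b \<or> strict_prefix a b \<or> strict_prefix b a" by (auto simp: strict_prefix_def)
next
  fix x :: "nat list" and S assume S: "S \<subseteq> {v \<in> UNIV. strict_prefix v x} \<and> S \<noteq> {}"
  then obtain k where k: "k \<in> S" by blast
  define m where "m = arg_min length (\<lambda>s. s \<in> S)"
  have m: "m \<in> S" "\<forall>s. s \<in> S \<longrightarrow> length m \<le> length s"
    using arg_min_nat_lemma[of "\<lambda>s. s \<in> S" k length] k unfolding m_def by blast+
  have "\<forall>s\<in>S. \<not> strict_prefix s m"
    using m(2) prefix_length_less by (metis not_le)
  then show "\<exists>m\<in>S. \<forall>s\<in>S. \<not> strict_prefix s m" using m(1) by blast
qed

lemma prefix_eq_len: "prefix x y \<Longrightarrow> length x = length y \<Longrightarrow> x = y"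
  by (auto simp: prefix_def)

lemma prefix_nth_eq2: "prefix x z \<Longrightarrow> k < length x \<Longrightarrow> x ! k = z ! k"
  by (auto simp: prefix_def nth_append)

lemma chain_cmp: assumes "is_chain UNIV strict_prefix B" "a \<in> B" "b \<in> B" shows "prefix a b \<or> prefix b a"
proof -
  have "a = b \<or> strict_prefix a b \<or> strict_prefix b a" using assms unfolding is_chain_def by blast
  then show ?thesis by (auto simp: strict_prefix_def)
qed

lemma branch_lists:
  fixes B :: "nat list set"
  assumes br: "is_branch UNIV strict_prefix B"
  shows "\<exists>b. B = range (\<lambda>n. map b [0..<n])"
proof -
  have ch: "is_chain UNIV strict_prefix B" using br unfolding is_branch_def by blast
  have mx: "\<And>D. is_chain UNIV strict_prefix D \<Longrightarrow> B \<subseteq> D \<Longrightarrow> D = B"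
    using br unfolding is_branch_def by blast
  have cmp: "a \<in> B \<Longrightarrow> b \<in> B \<Longrightarrow> prefix a b \<or> prefix b a" for a b using chain_cmp[OF ch] .
  have add: "z \<in> B" if "\<forall>e\<in>B. prefix z e \<or> prefix e z" for z
  proof -
    have pc: "a = b' \<or> strict_prefix a b' \<or> strict_prefix b' a" if "prefix a b' \<or> prefix b' a" for a b' :: "nat list"
      using that by (auto simp: strict_prefix_def)
    have "is_chain UNIV strict_prefix (insert z B)"
      unfolding is_chain_def
    proof (intro conjI ballI)
      fix a b' assume ab: "a \<in> insert z B" "b' \<in> insert z B"
      show "a = b' \<or> strict_prefix a b' \<or> strict_prefix b' a"
      proof (rule pc)
        show "prefix a b' \<or> prefix b' a"
          using ab that cmp by (cases "a = z"; cases "b' = z") auto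
      qed
    qed simp
    then have "insert z B = B" using mx by blast
    then show ?thesis by blast
  qed
  have closed: "z \<in> B" if "x \<in> B" "prefix z x" for x z
  proof (rule add, intro ballI)
    fix e assume "e \<in> B"
    then have "prefix e x \<or> prefix x e" using cmp that(1) by blast
    then show "prefix z e \<or> prefix e z"
    proof
      assume "prefix e x" then show ?thesis using prefix_same_cases[OF that(2)] by blast
    next
      assume "prefix x e" then have "prefix z e" using that(2) prefix_order.order_trans by blast
      then show ?thesis ..
    qed
  qed
  have nil: "[] \<in> B" by (rule add) simp
  have ext: "\<exists>e\<in>B. strict_prefix x e" if "x \<in> B" for x
  proof (rule ccontr)
    assume "\<not> (\<exists>e\<in>B. strict_prefix x e)"
    then have "\<forall>e\<in>B. prefix e x" using cmp that by (auto simp: strict_prefix_def)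
    moreover have "prefix x (x @ [0])" by simp
    ultimately have "\<forall>e\<in>B. prefix (x @ [0]) e \<or> prefix e (x @ [0])"
      using prefix_order.order_trans by blast
    then have "x @ [0] \<in> B" by (rule add)
    then show False using \<open>\<not> (\<exists>e\<in>B. strict_prefix x e)\<close> by (auto simp: strict_prefix_def)
  qed
  have len: "\<exists>x\<in>B. length x = n" for n
  proof (induction n)
    case 0 then show ?case using nil by auto
  next
    case (Suc n)
    then obtain x where x: "x \<in> B" "length x = n" by blast
    then obtain e where e: "e \<in> B" "strict_prefix x e" using ext by blast
    then have "n < length e" using x prefix_length_less by blast
    then have "Suc n \<le> length e" by simp
    then have "take (Suc n) e \<in> B" using closed[OF e(1)] by (simp add: take_is_prefix)
    then show ?case using \<open>Suc n \<le> length e\<close> by (intro bexI[of _ "take (Suc n) e"]) auto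
  qed
  have uniq: "x = x'" if "x \<in> B" "x' \<in> B" "length x = length x'" for x x'
  proof -
    from cmp[OF that(1,2)] show ?thesis
    proof
      assume "prefix x x'" then show ?thesis using that(3) prefix_eq_len by blast
    next
      assume "prefix x' x" then show ?thesis using that(3) prefix_eq_len by (metis)
    qed
  qed
  define el where "el n = (SOME x. x \<in> B \<and> length x = n)" for n
  have el: "el n \<in> B" "length (el n) = n" for n
    using someI_ex[OF len[of n, unfolded Bex_def]] unfolding el_def by blast+
  define b where "b i = el (Suc i) ! i" for i
  have mb: "map b [0..<n] = el n" for n
  proof (rule nth_equalityI)
    show "length (map b [0..<n]) = length (el n)" using el by simp
    fix i assume i: "i < length (map b [0..<n])"
    then have i': "i < n" by simp
    have "prefix (el (Suc i)) (el n)"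
      using cmp[OF el(1)[of "Suc i"] el(1)[of n]]
    proof
      assume "prefix (el n) (el (Suc i))"
      then have "n \<le> Suc i" using prefix_length_le el(2) by metis
      then have "n = Suc i" using i' by simp
      then show ?thesis by simp
    qed
    then have "el (Suc i) ! i = el n ! i"
      using prefix_nth_eq2[of "el (Suc i)" "el n" i] el(2)[of "Suc i"] by simp
    then show "map b [0..<n] ! i = el n ! i"
      using i' by (simp add: b_def)
  qed
  have "B = range (\<lambda>n. map b [0..<n])"
  proof
    show "range (\<lambda>n. map b [0..<n]) \<subseteq> B" using mb el by auto
    show "B \<subseteq> range (\<lambda>n. map b [0..<n])"
    proof
      fix x assume "x \<in> B"
      then have "x = el (length x)" using uniq el by metis
      then show "x \<in> range (\<lambda>n. map b [0..<n])" using mb by (metis rangeI)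
    qed
  qed
  then show ?thesis by blast
qed

context ctx
begin

lemma lf_snoc: "lf (x @ [j]) = Y \<inter> W (nxt (st x) j)" by (simp add: lf_def st_snoc)

lemma main_ctx:
  "baire_foliage_tree Y UNIV strict_prefix lf \<and> shoots_into UNIV strict_prefix lf UNIV strict_prefix S_leaf"
proof (intro conjI)
  show "baire_foliage_tree Y UNIV strict_prefix lf"
    unfolding baire_foliage_tree_def
  proof (intro conjI)
    show "is_tree (UNIV :: nat list set) strict_prefix" using tree_lists by simp
    show "\<exists>f :: nat list \<Rightarrow> nat list. bij_betw f UNIV (UNIV :: nat list set) \<and> (\<forall>x\<in>UNIV. \<forall>y\<in>UNIV. strict_prefix x y \<longleftrightarrow> strict_prefix (f x) (f y :: nat list))"
      by (intro exI[of _ "id :: nat list \<Rightarrow> nat list"]) (simp add: bij_id)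
    show "\<forall>x\<in>UNIV. openin (top_of_set Y) (lf x)"
      unfolding lf_def using open_W by blast
    show "\<forall>x\<in>UNIV. (\<exists>y\<in>UNIV. strict_prefix x y) \<longrightarrow>
        lf x = \<Union> (lf ` sons UNIV strict_prefix x) \<and> disjoint_family_on lf (sons UNIV strict_prefix x)"
    proof (intro ballI impI conjI)
      fix x :: "nat list"
      have "lf x = Y \<inter> (\<Union>j. W (nxt (st x) j))" using W_split[of "st x"] by (simp add: lf_def)
      also have "\<dots> = (\<Union>j. lf (x @ [j]))" by (auto simp: lf_snoc)
      also have "\<dots> = \<Union> (lf ` sons UNIV strict_prefix x)" by (simp add: sons_eq image_image)
      finally show "lf x = \<Union> (lf ` sons UNIV strict_prefix x)" .
      show "disjoint_family_on lf (sons UNIV strict_prefix x)"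
        unfolding disjoint_family_on_def sons_eq
      proof (clarsimp)
        fix j j' :: nat assume "j \<noteq> j'"
        then show "lf (x @ [j]) \<inter> lf (x @ [j']) = {}"
          using W_disj[OF Inv_st[of x]] by (auto simp: lf_snoc)
      qed
    qed
    show "(UNIV :: nat list set) \<noteq> {}" by simp
    show "\<forall>B. is_branch UNIV strict_prefix B \<longrightarrow> (\<exists>p. fruit lf B = {p})"
    proof (intro allI impI)
      fix B :: "nat list set" assume "is_branch UNIV strict_prefix B"
      then obtain b where B: "B = range (\<lambda>n. map b [0..<n])" using branch_lists by blast
      have "fruit lf B = (\<Inter>n. lf (map b [0..<n]))" by (simp add: fruit_def B image_image)
      also have "\<dots> = Y \<inter> (\<Inter>n. W (sb b n))" by (auto simp: lf_def sb_def)
      finally show "\<exists>p. fruit lf B = {p}" using fruit_sb[of b] by simp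
    qed
    show "\<exists>r\<in>UNIV. (\<forall>y\<in>UNIV. y \<noteq> r \<longrightarrow> strict_prefix r y) \<and> lf r = Y"
      by (rule bexI[of _ "[]"]) (auto simp: lf_def st_Nil W_root strict_prefix_def)
  qed
  show "shoots_into UNIV strict_prefix lf UNIV strict_prefix S_leaf"
    unfolding shoots_into_def
  proof (intro ballI)
    fix p y assume p: "p \<in> flesh UNIV lf" and y: "y \<in> scope UNIV S_leaf p"
    have pY: "p \<in> Y" using p by (auto simp: flesh_def lf_def)
    have "p \<in> S_leaf y" using y by (simp add: scope_def)
    then have yeq: "y = map p [0..<length y]" by (rule Sl_eq_map)
    obtain x where x: "p \<in> W (st x)" "proc (st x) (map p [0..<length y])"
      using prefixes_processed by blast
    have "x \<in> scope UNIV lf p" using x pY by (simp add: scope_def lf_def)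
    moreover have "shoot UNIV strict_prefix lf x \<ggreater>\<^sub>f shoot UNIV strict_prefix S_leaf y"
      using dom_at[OF x(2)] yeq by simp
    ultimately show "\<exists>x\<in>scope UNIV lf p. shoot UNIV strict_prefix lf x \<ggreater>\<^sub>f shoot UNIV strict_prefix S_leaf y"
      by blast
  qed
qed

end

theorem mainTheorem4:
  fixes U :: "nat \<Rightarrow> (nat \<Rightarrow> nat) set"
  assumes "\<And>n. open (U n)" and "\<And>n. pi_dense (U n)"
  shows "\<exists>(Q :: nat list set) lt l.
           baire_foliage_tree (\<Inter>n. U n) Q lt l \<and>
           shoots_into Q lt l (UNIV :: nat list set) strict_prefix S_leaf"
proof -
  interpret ctx U by unfold_locales (use assms in auto)
  show ?thesis using main_ctx unfolding Y_def by blast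
qed

end
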